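(* There are a polynomial $p$ and a sequence $\{D_n\}_{n\ge1}$ of definite causal theories such that, for every $n$, $D_n$ is on signature $\{x_1,\dots,x_n\}$, the set of models of $D_n$ is exactly PARITY$_n$, and $|D_n|\le p(n)$.
   Context: A literal is a variable $x$ or its negation $\neg x$. A definite causal theory on signature $\{x_1,\dots,x_n\}$ is a finite set of causal rules $H\Leftarrow G$, where $H$ is a literal over $x_1,\dots,x_n$ or $\bot$, and $G$ is a propositional formula (connectives $\wedge,\vee,\neg$) over $x_1,\dots,x_n$. For $I\subseteq\{x_1,\dots,x_n\}$ (viewed as the interpretation making exactly the variables in $I$ true), the reduct $D^I$ is the set of heads $H$ of all rules $H\Leftarrow G$ of $D$ with $I\models G$. $I$ is a model of $D$ if $I$ is the unique interpretation of $\{x_1,\dots,x_n\}$ satisfying every element of $D^I$. The size $|D|$ of a (not necessarily simple) definite theory is the number of connectives occurring in it. Strings $w\in\{0,1\}^n$ are identified with $\{x_i:w_i=1\}$; PARITY$_n$ is the set of strings in $\{0,1\}^n$ with an odd number of 1's. *)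

theory Defs
  imports Main "HOL-Computational_Algebra.Polynomial"
begin

datatype fm = Var nat | Neg fm | Conj fm fm | Disj fm fm

datatype head = PosLit nat | NegLit nat | Bot

type_synonym rule = "head \<times> fm"

text \<open>Interpretations are sets of (indices of) true variables.\<close>
fun sat :: "nat set \<Rightarrow> fm \<Rightarrow> bool" where
  "sat I (Var i) = (i \<in> I)"
| "sat I (Neg f) = (\<not> sat I f)"
| "sat I (Conj f g) = (sat I f \<and> sat I g)"
| "sat I (Disj f g) = (sat I f \<or> sat I g)"

fun sat_head :: "nat set \<Rightarrow> head \<Rightarrow> bool" where
  "sat_head I (PosLit i) = (i \<in> I)"
| "sat_head I (NegLit i) = (i \<notin> I)"
| "sat_head I Bot = False"

fun fm_vars :: "fm \<Rightarrow> nat set" where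
  "fm_vars (Var i) = {i}"
| "fm_vars (Neg f) = fm_vars f"
| "fm_vars (Conj f g) = fm_vars f \<union> fm_vars g"
| "fm_vars (Disj f g) = fm_vars f \<union> fm_vars g"

fun head_vars :: "head \<Rightarrow> nat set" where
  "head_vars (PosLit i) = {i}"
| "head_vars (NegLit i) = {i}"
| "head_vars Bot = {}"

definition causal_theory_on :: "nat \<Rightarrow> rule set \<Rightarrow> bool" where
  "causal_theory_on n D \<longleftrightarrow> finite D \<and>
     (\<forall>(H, G) \<in> D. head_vars H \<subseteq> {1..n} \<and> fm_vars G \<subseteq> {1..n})"

definition reduct :: "rule set \<Rightarrow> nat set \<Rightarrow> head set" where
  "reduct D I = {H. \<exists>G. (H, G) \<in> D \<and> sat I G}"

definition is_model :: "nat \<Rightarrow> rule set \<Rightarrow> nat set \<Rightarrow> bool" where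
  "is_model n D I \<longleftrightarrow> I \<subseteq> {1..n} \<and>
     (\<forall>J. J \<subseteq> {1..n} \<longrightarrow> ((\<forall>H \<in> reduct D I. sat_head J H) \<longleftrightarrow> J = I))"

definition models :: "nat \<Rightarrow> rule set \<Rightarrow> nat set set" where
  "models n D = {I. is_model n D I}"

text \<open>Size: number of connectives. A negative literal head counts one negation.\<close>
fun fm_size :: "fm \<Rightarrow> nat" where
  "fm_size (Var i) = 0"
| "fm_size (Neg f) = Suc (fm_size f)"
| "fm_size (Conj f g) = Suc (fm_size f + fm_size g)"
| "fm_size (Disj f g) = Suc (fm_size f + fm_size g)"

fun head_size :: "head \<Rightarrow> nat" where
  "head_size (PosLit i) = 0"
| "head_size (NegLit i) = 1"
| "head_size Bot = 0"

definition theory_size :: "rule set \<Rightarrow> nat" where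
  "theory_size D = (\<Sum>(H, G) \<in> D. head_size H + fm_size G)"

text \<open>PARITY_n, with strings identified with subsets of {x_1,...,x_n}.\<close>
definition parity :: "nat \<Rightarrow> nat set set" where
  "parity n = {I. I \<subseteq> {1..n} \<and> odd (card I)}"

end

theory Submission
  imports Defs
begin

function par :: "nat \<Rightarrow> nat \<Rightarrow> bool \<Rightarrow> fm" where
  "par lo len b = (if len \<le> 1 then (if b then Var lo else Neg (Var lo))
     else Disj (Conj (par lo (len div 2) b) (par (lo + len div 2) (len - len div 2) False))
               (Conj (par lo (len div 2) (\<not> b)) (par (lo + len div 2) (len - len div 2) True)))"
  by pat_completeness auto
termination by (relation "measure (\<lambda>(lo,len,b). len)") auto

declare par.simps[simp del]

lemma par_sat: "len \<ge> 1 \<Longrightarrow> sat I (par lo len b) \<longleftrightarrow> (odd (card (I \<inter> {lo..<lo+len})) = b)"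
proof (induction lo len b rule: par.induct)
  case (1 lo len b)
  show ?case
  proof (cases "len \<le> 1")
    case True
    then have "len = 1" using 1 by simp
    then have "I \<inter> {lo..<lo+len} = (if lo \<in> I then {lo} else {})" by auto
    then show ?thesis using True by (subst par.simps) auto
  next
    case False
    define h where "h = len div 2"
    have hs: "h \<ge> 1" "len - h \<ge> 1" using False unfolding h_def by auto
    have U: "I \<inter> {lo..<lo+len} = (I \<inter> {lo..<lo+h}) \<union> (I \<inter> {lo+h..<lo+h+(len-h)})"
      using hs by auto
    have C: "card (I \<inter> {lo..<lo+len}) = card (I \<inter> {lo..<lo+h}) + card (I \<inter> {lo+h..<lo+h+(len-h)})"
      unfolding U by (rule card_Un_disjoint) auto
    show ?thesis
      using 1(1)[OF False, folded h_def, OF hs(1)] 1(2)[OF False, folded h_def, OF hs(2)]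
        1(3)[OF False, folded h_def, OF hs(1)] 1(4)[OF False, folded h_def, OF hs(2)]
      using False C by (subst par.simps) (auto simp: h_def[symmetric])
  qed
qed

lemma par_vars: "len \<ge> 1 \<Longrightarrow> fm_vars (par lo len b) \<subseteq> {lo..<lo+len}"
proof (induction lo len b rule: par.induct)
  case (1 lo len b)
  show ?case
  proof (cases "len \<le> 1")
    case True
    then show ?thesis using 1(5) by (subst par.simps) auto
  next
    case False
    define h where "h = len div 2"
    have hs: "h \<ge> 1" "len - h \<ge> 1" using False unfolding h_def by auto
    show ?thesis
      using 1(1)[OF False, folded h_def, OF hs(1)] 1(2)[OF False, folded h_def, OF hs(2)]
        1(3)[OF False, folded h_def, OF hs(1)] 1(4)[OF False, folded h_def, OF hs(2)]
      using False hs by (subst par.simps) (simp add: h_def[symmetric], fastforce)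
  qed
qed

lemma par_size: "len \<ge> 1 \<Longrightarrow> fm_size (par lo len b) + 3 \<le> 4 * len^2"
proof (induction lo len b rule: par.induct)
  case (1 lo len b)
  show ?case
  proof (cases "len \<le> 1")
    case True
    then have "len = 1" using 1 by simp
    then show ?thesis by (subst par.simps) auto
  next
    case False
    define h where "h = len div 2"
    have hs: "h \<ge> 1" "len - h \<ge> 1" using False unfolding h_def by auto
    have e: "fm_size (par lo len b) = 3 + fm_size (par lo h b) + fm_size (par (lo+h) (len-h) False)
       + fm_size (par lo h (\<not>b)) + fm_size (par (lo+h) (len-h) True)"
      using False by (subst par.simps) (simp add: h_def)
    have k: "len - h = h \<or> len - h = h + 1" unfolding h_def by presburger
    have ar: "3 + 2*(4*h^2 - 3) + 2*(4*(len-h)^2 - 3) + 3 \<le> 4 * len^2"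
    proof -
      have hh: "1 \<le> h*h" using hs(1) by (metis mult_le_mono nat_mult_1)
      have "len = 2*h \<or> len = 2*h+1" unfolding h_def by presburger
      then show ?thesis
      proof
        assume l: "len = 2*h"
        then have "len - h = h" by simp
        then show ?thesis using l hs by (simp add: power2_eq_square) (use hh in linarith)
      next
        assume l: "len = 2*h+1"
        then have "len - h = h+1" by simp
        then show ?thesis using l hs by (simp add: power2_eq_square algebra_simps) (use hh in linarith)
      qed
    qed
    show ?thesis
      using 1(1)[OF False, folded h_def, OF hs(1)] 1(2)[OF False, folded h_def, OF hs(2)]
        1(3)[OF False, folded h_def, OF hs(1)] 1(4)[OF False, folded h_def, OF hs(2)]
      using e ar by linarith
  qed
qed

definition DD :: "nat \<Rightarrow> rule set" where
  "DD n = (\<lambda>i. (PosLit i, Var i)) ` {1..n} \<union> (\<lambda>i. (NegLit i, Neg (Var i))) ` {1..n}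
     \<union> {(Bot, Neg (par 1 n True))}"

lemma DD_on: "n \<ge> 1 \<Longrightarrow> causal_theory_on n (DD n)"
  using par_vars[of n 1 True] unfolding causal_theory_on_def DD_def by auto

lemma DD_size: "theory_size (DD n) = 2*n + 1 + fm_size (par 1 n True)"
proof -
  have d1: "(\<lambda>i. (PosLit i, Var i)) ` {1..n} \<inter> (\<lambda>i. (NegLit i, Neg (Var i))) ` {1..n} = {}" by auto
  have d2: "((\<lambda>i. (PosLit i, Var i)) ` {1..n} \<union> (\<lambda>i. (NegLit i, Neg (Var i))) ` {1..n})
     \<inter> {(Bot, Neg (par 1 n True))} = {}" by auto
  have i1: "inj_on (\<lambda>i. (PosLit i, Var i)) {1..n}" by (auto simp: inj_on_def)
  have i2: "inj_on (\<lambda>i. (NegLit i, Neg (Var i))) {1..n}" by (auto simp: inj_on_def)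
  show ?thesis
    unfolding theory_size_def DD_def
    apply (subst sum.union_disjoint, simp, simp, fact d2)
    apply (subst sum.union_disjoint, simp, simp, fact d1)
    apply (subst sum.reindex[OF i1], subst sum.reindex[OF i2])
    by simp
qed

lemma DD_reduct: "reduct (DD n) I = PosLit ` (I \<inter> {1..n}) \<union> NegLit ` ({1..n} - I)
   \<union> (if sat I (par 1 n True) then {} else {Bot})"
  unfolding reduct_def DD_def by auto

lemma DD_models: "n \<ge> 1 \<Longrightarrow> models n (DD n) = parity n"
proof (rule set_eqI)
  fix I assume n: "n \<ge> 1"
  show "I \<in> models n (DD n) \<longleftrightarrow> I \<in> parity n"
  proof
    assume "I \<in> models n (DD n)"
    then have sub: "I \<subseteq> {1..n}" and u: "\<forall>H \<in> reduct (DD n) I. sat_head I H"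
      unfolding models_def is_model_def by auto
    have "sat I (par 1 n True)"
    proof (rule ccontr)
      assume "\<not> sat I (par 1 n True)"
      then have "Bot \<in> reduct (DD n) I" unfolding DD_reduct by simp
      then show False using u by fastforce
    qed
    then have "odd (card (I \<inter> {1..<1+n}))" using par_sat[OF n] by simp
    moreover have "I \<inter> {1..<1+n} = I" using sub by auto
    ultimately show "I \<in> parity n" using sub unfolding parity_def by simp
  next
    assume "I \<in> parity n"
    then have sub: "I \<subseteq> {1..n}" and o: "odd (card I)" unfolding parity_def by auto
    have "I \<inter> {1..<1+n} = I" using sub by auto
    then have s: "sat I (par 1 n True)" using par_sat[OF n] o by simp
    have "\<forall>J. J \<subseteq> {1..n} \<longrightarrow> ((\<forall>H \<in> reduct (DD n) I. sat_head J H) \<longleftrightarrow> J = I)"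
    proof (intro allI impI)
      fix J assume J: "J \<subseteq> {1..n}"
      have "(\<forall>H \<in> reduct (DD n) I. sat_head J H) \<longleftrightarrow> (\<forall>i\<in>{1..n}. i \<in> J \<longleftrightarrow> i \<in> I)"
        unfolding DD_reduct using s by (auto, force+)
      also have "\<dots> \<longleftrightarrow> J = I" using J sub by blast
      finally show "(\<forall>H \<in> reduct (DD n) I. sat_head J H) \<longleftrightarrow> J = I" .
    qed
    then show "I \<in> models n (DD n)" using sub unfolding models_def is_model_def by auto
  qed
qed

theorem mainTheorem19:
  shows "\<exists>(p :: real poly) (D :: nat \<Rightarrow> rule set). \<forall>n \<ge> 1.
           causal_theory_on n (D n) \<and> models n (D n) = parity n \<and>
           real (theory_size (D n)) \<le> poly p (real n)"
proof (intro exI allI impI conjI)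
  fix n :: nat assume n: "n \<ge> 1"
  show "causal_theory_on n (DD n)" using DD_on[OF n] .
  show "models n (DD n) = parity n" using DD_models[OF n] .
  have "theory_size (DD n) \<le> 2 + 2*n + 4*n^2" using DD_size[of n] par_size[OF n, of 1 True] by simp
  then have "real (theory_size (DD n)) \<le> real (2 + 2*n + 4*n^2)" by linarith
  also have "\<dots> = poly [:2, 2, 4:] (real n)" by (simp add: algebra_simps power2_eq_square)
  finally show "real (theory_size (DD n)) \<le> poly [:2, 2, 4:] (real n)" .
qed

end
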